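(* Let $M_{cc}$ be the one-state Turing machine defined below. The language $L_{cc}=\{x\in\{u,0,h\}^*\mid M_{cc}\text{ halts on input }x\}$ is not context-free.
   Context: A one-state Turing machine is a tuple $\langle \{q\}, \Sigma, \Gamma, q, H, \delta\rangle$ with the following components: a unique state $q$; an input alphabet $\Sigma$ not containing the blank symbol $\sqcup$; a tape alphabet $\Gamma\supseteq\Sigma\cup\{\sqcup\}$; a set of halting symbols $H\subseteq\Gamma$; and a transition function $\delta:\Gamma\setminus H\to\Gamma\times\{L,R\}$. The tape is infinite in both directions. On input $x$, the tape holds $x$ with blanks everywhere else, and the head starts on the leftmost symbol of $x$. At each step, if the scanned symbol is in $H$, the machine halts. Otherwise, with $\delta(a)=(b,D)$ for the scanned symbol $a$, it writes $b$ and moves one cell in direction $D$. The machine $M_{cc}$ is this kind of machine with $\Sigma=\{u,0,h\}$, $\Gamma=\{\sqcup,u,U,h,0,1,Z,C,B\}$, $H=\{h\}$, and transitions $\delta(u)=(U,R)$, $\delta(0)=(1,L)$, $\delta(U)=(C,R)$, $\delta(1)=(Z,R)$, $\delta(Z)=(0,L)$, $\delta(C)=(B,L)$, $\delta(B)=(C,R)$, $\delta(\sqcup)=(\sqcup,L)$. *)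

theory Defs
  imports Main
begin

type_synonym 't cfg_prods = "(nat \<times> (nat + 't) list) set"

inductive_set cfg_step :: "'t cfg_prods \<Rightarrow> ((nat + 't) list \<times> (nat + 't) list) set"
  for P :: "'t cfg_prods" where
  "(A, w) \<in> P \<Longrightarrow> (u @ [Inl A] @ v, u @ w @ v) \<in> cfg_step P"

definition cfg_lang :: "'t cfg_prods \<Rightarrow> nat \<Rightarrow> 't list set" where
  "cfg_lang P S = {w. ([Inl S], map Inr w) \<in> (cfg_step P)\<^sup>*}"

definition context_free :: "'t list set \<Rightarrow> bool" where
  "context_free L \<longleftrightarrow> (\<exists>P S. finite P \<and> L = cfg_lang P S)"

datatype tsym = Blank | Su | SU | Sh | S0 | S1 | SZ | SC | SB

datatype dir = L | R

datatype isym = Iu | I0 | Ih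

fun embed :: "isym \<Rightarrow> tsym" where
  "embed Iu = Su" | "embed I0 = S0" | "embed Ih = Sh"

text \<open>Halting symbols H = {h}; the transition function on the non-halting symbols.
  The value at Sh is irrelevant (never used, since the machine halts there).\<close>
fun delta :: "tsym \<Rightarrow> tsym \<times> dir" where
  "delta Su = (SU, R)"
| "delta S0 = (S1, L)"
| "delta SU = (SC, R)"
| "delta S1 = (SZ, R)"
| "delta SZ = (S0, L)"
| "delta SC = (SB, L)"
| "delta SB = (SC, R)"
| "delta Blank = (Blank, L)"
| "delta Sh = (Sh, R)"

type_synonym config = "(int \<Rightarrow> tsym) \<times> int"

definition init_config :: "isym list \<Rightarrow> config" where
  "init_config x = ((\<lambda>i. if 0 \<le> i \<and> i < int (length x) then embed (x ! nat i) else Blank), 0)"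

fun tm_step :: "config \<Rightarrow> config" where
  "tm_step (t, p) = (let (b, d) = delta (t p) in
     (t(p := b), if d = R then p + 1 else p - 1))"

definition halts :: "isym list \<Rightarrow> bool" where
  "halts x \<longleftrightarrow> (\<exists>n. let (t, p) = (tm_step ^^ n) (init_config x) in t p = Sh)"

definition L_cc :: "isym list set" where
  "L_cc = {x. halts x}"

end

theory Submission imports Defs begin


definition tape_of :: "tsym list \<Rightarrow> int \<Rightarrow> tsym" where
  "tape_of xs i = (if 0 \<le> i \<and> i < int (length xs) then xs ! nat i else Blank)"

lemma tape_of_at: "tape_of (pre @ c # post) (int (length pre)) = c"
  by (simp add: tape_of_def)

lemma nth_other: "n \<noteq> length pre \<Longrightarrow> (pre @ c # post) ! n = (pre @ c' # post) ! n"
  by (cases "n < length pre") (auto simp: nth_append nth_Cons split: nat.split)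

lemma tape_of_upd: "(tape_of (pre @ c # post))(int (length pre) := c') = tape_of (pre @ c' # post)"
proof
  fix i show "((tape_of (pre @ c # post))(int (length pre) := c')) i = tape_of (pre @ c' # post) i"
  proof (cases "i = int (length pre)")
    case True then show ?thesis by (simp add: tape_of_def)
  next
    case False
    then have "0 \<le> i \<Longrightarrow> nat i \<noteq> length pre" by auto
    then show ?thesis using False unfolding tape_of_def
      using nth_other[of "nat i" pre c post c'] by auto
  qed
qed

lemma step_at: "delta c = (c', d) \<Longrightarrow>
  tm_step (tape_of (pre @ c # post), int (length pre)) =
   (tape_of (pre @ c' # post), if d = R then int (length pre) + 1 else int (length pre) - 1)"
  by (simp add: tape_of_at tape_of_upd)

definition runs :: "config \<Rightarrow> nat \<Rightarrow> config \<Rightarrow> bool" where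
  "runs c k c' \<longleftrightarrow> (tm_step ^^ k) c = c' \<and> (\<forall>j<k. fst ((tm_step ^^ j) c) (snd ((tm_step ^^ j) c)) \<noteq> Sh)"

lemma funpow_split: "(f ^^ (m + n)) c = (f ^^ n) ((f ^^ m) c)"
  by (induction n) auto

lemma runs_trans: "runs c k1 c1 \<Longrightarrow> runs c1 k2 c2 \<Longrightarrow> runs c (k1 + k2) c2"
  unfolding runs_def
proof (intro conjI allI impI)
  assume a: "(tm_step ^^ k1) c = c1 \<and> (\<forall>j<k1. fst ((tm_step ^^ j) c) (snd ((tm_step ^^ j) c)) \<noteq> Sh)"
     and b: "(tm_step ^^ k2) c1 = c2 \<and> (\<forall>j<k2. fst ((tm_step ^^ j) c1) (snd ((tm_step ^^ j) c1)) \<noteq> Sh)"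
  show "(tm_step ^^ (k1 + k2)) c = c2" using a b funpow_split[where f=tm_step and m=k1 and n=k2 and c=c] by simp
  fix j assume "j < k1 + k2"
  show "fst ((tm_step ^^ j) c) (snd ((tm_step ^^ j) c)) \<noteq> Sh"
  proof (cases "j < k1")
    case True then show ?thesis using a by blast
  next
    case False
    then have "j = k1 + (j - k1)" by simp
    then have "(tm_step ^^ j) c = (tm_step ^^ (j - k1)) ((tm_step ^^ k1) c)"
      using funpow_split[where f=tm_step and m=k1 and n="j - k1" and c=c] by simp
    then have "(tm_step ^^ j) c = (tm_step ^^ (j - k1)) c1" using a by simp
    then show ?thesis using b False \<open>j < k1 + k2\<close> by auto
  qed
qed

lemma runs_0: "runs c 0 c" by (simp add: runs_def)

lemma runs_1: "delta c = (c', d) \<Longrightarrow> c \<noteq> Sh \<Longrightarrow>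
  runs (tape_of (pre @ c # post), int (length pre)) 1
   (tape_of (pre @ c' # post), if d = R then int (length pre) + 1 else int (length pre) - 1)"
  unfolding runs_def using step_at[of c c' d pre post] by (simp add: tape_of_at)

lemma runs_1R: "delta c = (c', R) \<Longrightarrow> c \<noteq> Sh \<Longrightarrow>
  runs (tape_of (pre @ c # post), int (length pre)) 1 (tape_of (pre @ c' # post), int (length pre) + 1)"
  using runs_1[of c c' R pre post] by (simp only: if_True simp_thms)

lemma runs_1L: "delta c = (c', L) \<Longrightarrow> c \<noteq> Sh \<Longrightarrow>
  runs (tape_of (pre @ c # post), int (length pre)) 1 (tape_of (pre @ c' # post), int (length pre) - 1)"
  using runs_1[of c c' L pre post] by (simp only: if_False dir.distinct simp_thms)

lemma sweepR: "delta s = (s', R) \<Longrightarrow> s \<noteq> Sh \<Longrightarrow>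
  runs (tape_of (pre @ replicate k s @ post), int (length pre)) k
       (tape_of (pre @ replicate k s' @ post), int (length pre) + int k)"
proof (induction k arbitrary: pre)
  case 0 then show ?case by (simp add: runs_0)
next
  case (Suc k)
  have 1: "runs (tape_of (pre @ s # (replicate k s @ post)), int (length pre)) 1
            (tape_of (pre @ s' # (replicate k s @ post)), int (length pre) + 1)"
    using runs_1R[OF Suc.prems, of pre "replicate k s @ post"] .
  have 2: "runs (tape_of ((pre @ [s']) @ replicate k s @ post), int (length (pre @ [s']))) k
       (tape_of ((pre @ [s']) @ replicate k s' @ post), int (length (pre @ [s'])) + int k)"
    using Suc.IH[OF Suc.prems] .
  have 2: "runs (tape_of (pre @ s' # (replicate k s @ post)), int (length pre) + 1) k
       (tape_of (pre @ replicate (Suc k) s' @ post), int (length pre) + int (Suc k))"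
  proof -
    have e1: "(pre @ [s']) @ replicate k s @ post = pre @ s' # (replicate k s @ post)" by simp
    have e2: "(pre @ [s']) @ replicate k s' @ post = pre @ replicate (Suc k) s' @ post" by simp
    have e3: "int (length (pre @ [s'])) = int (length pre) + 1" by simp
    have e4: "int (length pre) + 1 + int k = int (length pre) + int (Suc k)" by simp
    show ?thesis using 2 unfolding e1 e2 e3 e4 .
  qed
  have "runs (tape_of (pre @ replicate (Suc k) s @ post), int (length pre)) (1 + k)
       (tape_of (pre @ replicate (Suc k) s' @ post), int (length pre) + int (Suc k))"
    using runs_trans[OF 1 2] by (simp only: replicate_Suc append_Cons)
  then show ?case by (simp only: plus_1_eq_Suc)
qed

lemma sweepL: "delta s = (s', L) \<Longrightarrow> s \<noteq> Sh \<Longrightarrow>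
  runs (tape_of (pre @ replicate k s @ post), int (length pre) + int k - 1) k
       (tape_of (pre @ replicate k s' @ post), int (length pre) - 1)"
proof (induction k arbitrary: post)
  case 0 then show ?case by (simp add: runs_0)
next
  case (Suc k)
  have 1: "runs (tape_of ((pre @ replicate k s) @ s # post), int (length (pre @ replicate k s))) 1
            (tape_of ((pre @ replicate k s) @ s' # post), int (length (pre @ replicate k s)) - 1)"
    using runs_1L[OF Suc.prems, of "pre @ replicate k s" post] .
  have e1: "(pre @ replicate k s) @ s # post = pre @ replicate (Suc k) s @ post"
    by (simp add: replicate_app_Cons_same)
  have e2: "int (length (pre @ replicate k s)) = int (length pre) + int k" by simp
  have e4: "(pre @ replicate k s) @ s' # post = pre @ replicate k s @ (s' # post)" by simp
  have 1: "runs (tape_of (pre @ replicate (Suc k) s @ post), int (length pre) + int k) 1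
            (tape_of (pre @ replicate k s @ (s' # post)), int (length pre) + int k - 1)"
    using 1 unfolding e1 e2 e4 .
  have 2: "runs (tape_of (pre @ replicate k s @ (s' # post)), int (length pre) + int k - 1) k
       (tape_of (pre @ replicate k s' @ (s' # post)), int (length pre) - 1)"
    using Suc.IH[OF Suc.prems] .
  have e: "pre @ replicate k s' @ (s' # post) = pre @ replicate (Suc k) s' @ post"
    by (simp add: replicate_app_Cons_same)
  have e5: "int (length pre) + int (Suc k) - 1 = int (length pre) + int k" by simp
  from runs_trans[OF 1 2] show ?case unfolding e e5 by (simp only: plus_1_eq_Suc)
qed

lemma runs_conv: "runs c k c1 \<Longrightarrow> c1 = c1' \<Longrightarrow> runs c k c1'" by simp

lemma runs_trans': "runs c k1 c1 \<Longrightarrow> runs c1' k2 c2 \<Longrightarrow> c1 = c1' \<Longrightarrow> runs c (k1 + k2) c2"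
  using runs_trans by blast

fun cb :: "bool \<Rightarrow> tsym" where "cb True = S1" | "cb False = S0"

definition canon :: "nat \<Rightarrow> nat \<Rightarrow> bool list \<Rightarrow> config" where
  "canon m n bs = (tape_of (replicate m SU @ replicate n SC @ map cb bs @ [Sh]), int (m + n))"

lemma phaseA: "runs (canon m n (replicate j True @ False # rest)) (j + 1 + j + n)
   (tape_of (replicate m SU @ replicate n SB @ replicate j S0 @ S1 # map cb rest @ [Sh]), int m - 1)"
proof -
  define P where "P = replicate m SU @ replicate n SC"
  define T where "T = map cb rest @ [Sh]"
  have s1: "runs (tape_of (P @ replicate j S1 @ (S0 # T)), int (length P)) j
      (tape_of (P @ replicate j SZ @ (S0 # T)), int (length P) + int j)"
    by (rule sweepR) auto
  have s2: "runs (tape_of ((P @ replicate j SZ) @ S0 # T), int (length (P @ replicate j SZ))) 1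
     (tape_of ((P @ replicate j SZ) @ S1 # T), int (length (P @ replicate j SZ)) - 1)"
    by (rule runs_1L) auto
  have s3: "runs (tape_of (P @ replicate j SZ @ (S1 # T)), int (length P) + int j - 1) j
     (tape_of (P @ replicate j S0 @ (S1 # T)), int (length P) - 1)"
    by (rule sweepL) auto
  have s4: "runs (tape_of (replicate m SU @ replicate n SC @ (replicate j S0 @ S1 # T)), int (length (replicate m SU)) + int n - 1) n
     (tape_of (replicate m SU @ replicate n SB @ (replicate j S0 @ S1 # T)), int (length (replicate m SU)) - 1)"
    by (rule sweepL) auto
  have s12: "runs (tape_of (P @ replicate j S1 @ (S0 # T)), int (length P)) (j + 1)
     (tape_of ((P @ replicate j SZ) @ S1 # T), int (length (P @ replicate j SZ)) - 1)"
    by (rule runs_trans'[OF s1 s2]) simp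
  have s123: "runs (tape_of (P @ replicate j S1 @ (S0 # T)), int (length P)) (j + 1 + j)
     (tape_of (P @ replicate j S0 @ (S1 # T)), int (length P) - 1)"
    by (rule runs_trans'[OF s12 s3]) simp
  have s1234: "runs (tape_of (P @ replicate j S1 @ (S0 # T)), int (length P)) (j + 1 + j + n)
     (tape_of (replicate m SU @ replicate n SB @ (replicate j S0 @ S1 # T)), int (length (replicate m SU)) - 1)"
    by (rule runs_trans'[OF s123 s4]) (simp add: P_def)
  show ?thesis using s1234 unfolding canon_def P_def T_def by simp
qed

lemma inc_step: "runs (canon (Suc m) n (replicate j True @ False # rest)) (j + 1 + j + n + 1 + n)
   (canon m (Suc n) (replicate j False @ True # rest))"
proof -
  define Q where "Q = replicate j S0 @ S1 # map cb rest @ [Sh]"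
  have a: "runs (canon (Suc m) n (replicate j True @ False # rest)) (j + 1 + j + n)
   (tape_of (replicate m SU @ SU # (replicate n SB @ Q)), int m)"
    using phaseA[of "Suc m" n j rest] unfolding Q_def by (simp add: replicate_app_Cons_same)
  have b: "runs (tape_of (replicate m SU @ SU # (replicate n SB @ Q)), int (length (replicate m SU))) 1
      (tape_of (replicate m SU @ SC # (replicate n SB @ Q)), int (length (replicate m SU)) + 1)"
    by (rule runs_1R) auto
  have c: "runs (tape_of ((replicate m SU @ [SC]) @ replicate n SB @ Q), int (length (replicate m SU @ [SC]))) n
      (tape_of ((replicate m SU @ [SC]) @ replicate n SC @ Q), int (length (replicate m SU @ [SC])) + int n)"
    by (rule sweepR) auto
  have ab: "runs (canon (Suc m) n (replicate j True @ False # rest)) (j + 1 + j + n + 1)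
      (tape_of (replicate m SU @ SC # (replicate n SB @ Q)), int (length (replicate m SU)) + 1)"
    by (rule runs_trans'[OF a b]) simp
  have abc: "runs (canon (Suc m) n (replicate j True @ False # rest)) (j + 1 + j + n + 1 + n)
      (tape_of ((replicate m SU @ [SC]) @ replicate n SC @ Q), int (length (replicate m SU @ [SC])) + int n)"
    by (rule runs_trans'[OF ab c]) simp
  show ?thesis using abc unfolding canon_def Q_def by (simp add: replicate_app_Cons_same add.assoc)
qed

fun val :: "bool list \<Rightarrow> nat" where
  "val [] = 0" | "val (x # xs) = (if x then 1 else 0) + 2 * val xs"

lemma val_inc: "val (replicate j True @ False # rest) + 1 = val (replicate j False @ True # rest)"
  by (induction j) auto

lemma val_lt: "val bs < 2 ^ length bs"
  by (induction bs) auto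

lemma val_false: "False \<in> set bs \<Longrightarrow> val bs + 1 < 2 ^ length bs"
proof (induction bs)
  case Nil then show ?case by simp
next
  case (Cons x xs)
  show ?case
  proof (cases x)
    case True
    then have "False \<in> set xs" using Cons.prems by auto
    then show ?thesis using Cons.IH True by simp
  next
    case False
    then show ?thesis using val_lt[of xs] by simp
  qed
qed

lemma val_all: "False \<notin> set bs \<Longrightarrow> bs = replicate (length bs) True"
  by (induction bs) auto

lemma split_false: "False \<in> set bs \<Longrightarrow> \<exists>j rest. bs = replicate j True @ False # rest"
proof (induction bs)
  case Nil then show ?case by simp
next
  case (Cons x xs)
  show ?case
  proof (cases x)
    case True
    then have "False \<in> set xs" using Cons.prems by auto
    then obtain j rest where "xs = replicate j True @ False # rest" using Cons.IH by blast
    then have "x # xs = replicate (Suc j) True @ False # rest" using True by simp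
    then show ?thesis by blast
  next
    case False
    then have "x # xs = replicate 0 True @ False # xs" by simp
    then show ?thesis by blast
  qed
qed

lemma iterate: "val bs + N < 2 ^ length bs \<Longrightarrow>
  \<exists>K bs'. runs (canon (m + N) n bs) K (canon m (n + N) bs') \<and> length bs' = length bs \<and> val bs' = val bs + N"
proof (induction N arbitrary: n bs)
  case 0 then show ?case using runs_0 by fastforce
next
  case (Suc N)
  have "False \<in> set bs"
  proof (rule ccontr)
    assume "False \<notin> set bs"
    then have "bs = replicate (length bs) True" by (rule val_all)
    moreover have "val (replicate k True) + 1 = 2 ^ k" for k by (induction k) auto
    ultimately have "val bs + 1 = 2 ^ length bs" by metis
    then show False using Suc.prems by simp
  qed
  then obtain j rest where bs: "bs = replicate j True @ False # rest" using split_false by blast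
  define bs1 where "bs1 = replicate j False @ True # rest"
  have r1: "runs (canon (Suc (m + N)) n bs) (j + 1 + j + n + 1 + n) (canon (m + N) (Suc n) bs1)"
    unfolding bs bs1_def by (rule inc_step)
  have v1: "val bs1 = val bs + 1" unfolding bs bs1_def using val_inc[of j rest] by simp
  have l1: "length bs1 = length bs" unfolding bs bs1_def by simp
  have "val bs1 + N < 2 ^ length bs1" using Suc.prems v1 l1 by simp
  from Suc.IH[OF this, of "Suc n"] obtain K bs' where
    r2: "runs (canon (m + N) (Suc n) bs1) K (canon m (Suc n + N) bs')"
    and "length bs' = length bs1" "val bs' = val bs1 + N" by blast
  have "runs (canon (m + Suc N) n bs) ((j + 1 + j + n + 1 + n) + K) (canon m (n + Suc N) bs')"
    using runs_trans[OF r1 r2] by simp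
  then show ?case using \<open>length bs' = length bs1\<close> \<open>val bs' = val bs1 + N\<close> l1 v1 by auto
qed

lemma init_eq: "init_config x = (tape_of (map embed x), 0)"
  unfolding init_config_def tape_of_def by (auto simp: fun_eq_iff)

lemma doom: "(tm_step ^^ k) (tape_of xs, p) = (tape_of xs, p - int k)" if "p < 0"
  using that
proof (induction k arbitrary: p)
  case 0 then show ?case by simp
next
  case (Suc k)
  have "tape_of xs p = Blank" using Suc.prems by (simp add: tape_of_def)
  then have "tm_step (tape_of xs, p) = (tape_of xs, p - 1)" by (simp add: fun_upd_idem)
  then have "(tm_step ^^ Suc k) (tape_of xs, p) = (tm_step ^^ k) (tape_of xs, p - 1)"
    by (simp add: funpow_Suc_right del: funpow.simps)
  also have "\<dots> = (tape_of xs, p - 1 - int k)" using Suc.IH[of "p - 1"] Suc.prems by simp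
  finally show ?case by simp
qed

lemma val_rep_False[simp]: "val (replicate k False) = 0" by (induction k) auto

definition wd :: "nat \<Rightarrow> nat \<Rightarrow> isym list" where
  "wd a b = replicate a Iu @ replicate b I0 @ [Ih]"

lemma phase1: "runs (init_config (wd a b)) a (canon a 0 (replicate b False))"
proof -
  have "runs (tape_of ([] @ replicate a Su @ (replicate b S0 @ [Sh])), int (length ([]::tsym list))) a
     (tape_of ([] @ replicate a SU @ (replicate b S0 @ [Sh])), int (length ([]::tsym list)) + int a)"
    by (rule sweepR) auto
  then show ?thesis unfolding init_eq wd_def canon_def by (simp add: map_replicate_const)
qed

lemma halts_yes: "halts (wd (2 ^ b - 1) b)"
proof -
  define a :: nat where "a = 2 ^ b - 1"
  have "val (replicate b False) + a < 2 ^ length (replicate b False)"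
  proof -
    have "val (replicate k False) = 0" for k by (induction k) auto
    then show ?thesis unfolding a_def by simp
  qed
  then have "\<exists>K bs'. runs (canon a 0 (replicate b False)) K (canon 0 a bs') \<and> length bs' = b \<and> val bs' = a"
    using iterate[of "replicate b False" a 0 0] by simp
  then obtain K bs' where
    r: "runs (canon a 0 (replicate b False)) K (canon 0 a bs')" and l: "length bs' = b" and v: "val bs' = a"
    by blast
  have "False \<notin> set bs'"
    using val_false[of bs'] l v unfolding a_def by auto
  then have bs': "bs' = replicate b True" using val_all l by metis
  have r3: "runs (tape_of (replicate a SC @ replicate b S1 @ [Sh]), int (length (replicate a SC))) b
    (tape_of (replicate a SC @ replicate b SZ @ [Sh]), int (length (replicate a SC)) + int b)"
    by (rule sweepR) auto
  have "runs (init_config (wd a b)) (a + K + b) (tape_of (replicate a SC @ replicate b SZ @ [Sh]), int a + int b)"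
    using runs_trans'[OF runs_trans[OF phase1 r] r3] unfolding canon_def bs' by (simp add: map_replicate_const)
  then have e: "(tm_step ^^ (a + K + b)) (init_config (wd a b)) = (tape_of ((replicate a SC @ replicate b SZ) @ Sh # []), int (length (replicate a SC @ replicate b SZ)))"
    unfolding runs_def by simp
  show ?thesis unfolding halts_def a_def[symmetric]
    by (rule exI[of _ "a + K + b"]) (simp only: e tape_of_at Let_def split)
qed

lemma halts_no: "(a::nat) + 1 < 2 ^ b \<Longrightarrow> \<not> halts (wd a b)"
proof
  assume ab: "a + 1 < 2 ^ b" and h: "halts (wd a b)"
  have "val (replicate b False) + a < 2 ^ length (replicate b False)"
  proof -
    have "val (replicate k False) = 0" for k by (induction k) auto
    then show ?thesis using ab by simp
  qed
  then have "\<exists>K bs'. runs (canon a 0 (replicate b False)) K (canon 0 a bs') \<and> length bs' = b \<and> val bs' = a"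
    using iterate[of "replicate b False" a 0 0] by simp
  then obtain K bs' where
    r: "runs (canon a 0 (replicate b False)) K (canon 0 a bs')" and l: "length bs' = b" and v: "val bs' = a"
    by blast
  have "False \<in> set bs'"
  proof (rule ccontr)
    assume "False \<notin> set bs'"
    then have "bs' = replicate b True" using val_all l by metis
    moreover have "val (replicate k True) + 1 = 2 ^ k" for k by (induction k) auto
    ultimately show False using v ab by auto
  qed
  then obtain j rest where bs': "bs' = replicate j True @ False # rest" using split_false by blast
  define xs where "xs = replicate 0 SU @ replicate a SB @ replicate j S0 @ S1 # map cb rest @ [Sh]"
  have r2: "runs (canon 0 a bs') (j + 1 + j + a) (tape_of xs, int 0 - 1)"
    unfolding bs' xs_def by (rule phaseA)
  define T where "T = a + K + (j + 1 + j + a)"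
  have rr: "runs (init_config (wd a b)) T (tape_of xs, - 1)"
    unfolding T_def using runs_trans[OF runs_trans[OF phase1 r] r2] by simp
  from h obtain n where hn: "let (t, p) = (tm_step ^^ n) (init_config (wd a b)) in t p = Sh"
    unfolding halts_def by blast
  show False
  proof (cases "n < T")
    case True
    then show False using rr hn unfolding runs_def by (auto simp: Let_def split: prod.splits)
  next
    case False
    then have "(tm_step ^^ n) (init_config (wd a b)) = (tm_step ^^ (n - T)) ((tm_step ^^ T) (init_config (wd a b)))"
      using funpow_split[where f=tm_step and m=T and n="n - T"] by simp
    also have "\<dots> = (tape_of xs, - 1 - int (n - T))" using rr doom[of "-1" "n - T" xs] unfolding runs_def by simp
    finally show False using hn by (simp add: tape_of_def)
  qed
qed



inductive gh :: "'t cfg_prods \<Rightarrow> nat \<Rightarrow> (nat + 't) list \<Rightarrow> 't list \<Rightarrow> bool" for P where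
  ghNil: "gh P n [] []"
| ghT: "gh P n \<alpha> w \<Longrightarrow> gh P n (Inr a # \<alpha>) (a # w)"
| ghN: "(A, \<beta>) \<in> P \<Longrightarrow> gh P m \<beta> w1 \<Longrightarrow> m < n \<Longrightarrow> gh P n \<alpha> w2 \<Longrightarrow> gh P n (Inl A # \<alpha>) (w1 @ w2)"

lemma gh_mono: "gh P n \<alpha> w \<Longrightarrow> n \<le> n' \<Longrightarrow> gh P n' \<alpha> w"
proof (induction rule: gh.induct)
  case (ghNil n) then show ?case by (simp add: gh.intros)
next
  case (ghT n \<alpha> w a) then show ?case by (simp add: gh.intros)
next
  case (ghN A \<beta> m w1 n \<alpha> w2) then show ?case by (meson gh.ghN less_le_trans)
qed

lemma gh_app: "gh P n \<alpha> w1 \<Longrightarrow> gh P n \<beta> w2 \<Longrightarrow> gh P n (\<alpha> @ \<beta>) (w1 @ w2)"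
proof (induction rule: gh.induct)
  case (ghNil n) then show ?case by simp
next
  case (ghT n \<alpha> w a) then show ?case by (simp add: gh.ghT)
next
  case (ghN A \<beta>' m w1 n \<alpha> w2) then show ?case using gh.ghN[of A \<beta>' P m w1 n "\<alpha> @ \<beta>" "w2 @ _"] by simp
qed

lemma gh_NilE: "gh P n [] w \<Longrightarrow> w = []"
  by (auto elim: gh.cases)

lemma gh_ConsT: "gh P n (Inr a # \<alpha>) w \<Longrightarrow> \<exists>w'. w = a # w' \<and> gh P n \<alpha> w'"
  by (auto elim: gh.cases)

lemma gh_ConsN: "gh P n (Inl A # \<alpha>) w \<Longrightarrow>
   \<exists>\<beta> m w1 w2. (A, \<beta>) \<in> P \<and> gh P m \<beta> w1 \<and> m < n \<and> gh P n \<alpha> w2 \<and> w = w1 @ w2"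
  by (cases rule: gh.cases) fastforce+

lemma gh_split: "gh P n (\<alpha> @ \<beta>) w \<Longrightarrow> \<exists>w1 w2. w = w1 @ w2 \<and> gh P n \<alpha> w1 \<and> gh P n \<beta> w2"
proof (induction \<alpha> arbitrary: w)
  case Nil then show ?case using gh.ghNil by fastforce
next
  case (Cons y \<alpha>)
  show ?case
  proof (cases y)
    case (Inr a)
    then obtain w' where "w = a # w'" "gh P n (\<alpha> @ \<beta>) w'" using gh_ConsT Cons.prems by fastforce
    moreover obtain w1 w2 where "w' = w1 @ w2" "gh P n \<alpha> w1" "gh P n \<beta> w2" using Cons.IH calculation(2) by blast
    ultimately show ?thesis using Inr by (metis append_Cons gh.ghT)
  next
    case (Inl A)
    then obtain \<beta>' m w1 w2 where h: "(A, \<beta>') \<in> P" "gh P m \<beta>' w1" "m < n" "gh P n (\<alpha> @ \<beta>) w2" "w = w1 @ w2"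
      using gh_ConsN Cons.prems by fastforce
    then obtain u1 u2 where "w2 = u1 @ u2" "gh P n \<alpha> u1" "gh P n \<beta> u2" using Cons.IH by blast
    then show ?thesis using h Inl by (metis append_assoc gh.ghN)
  qed
qed

lemma gh_terms: "gh P 0 (map Inr w) w"
  by (induction w) (auto intro: gh.intros)

lemma gh_single: "gh P n [Inl A] w \<longleftrightarrow> (\<exists>\<beta> m. (A, \<beta>) \<in> P \<and> gh P m \<beta> w \<and> m < n)"
proof
  assume "gh P n [Inl A] w"
  then obtain \<beta> m w1 w2 where "(A, \<beta>) \<in> P" "gh P m \<beta> w1" "m < n" "gh P n [] w2" "w = w1 @ w2"
    using gh_ConsN by blast
  moreover from this(4) have "w2 = []" by (rule gh_NilE)
  ultimately show "\<exists>\<beta> m. (A, \<beta>) \<in> P \<and> gh P m \<beta> w \<and> m < n" by auto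
next
  assume "\<exists>\<beta> m. (A, \<beta>) \<in> P \<and> gh P m \<beta> w \<and> m < n"
  then obtain \<beta> m where "(A, \<beta>) \<in> P" "gh P m \<beta> w" "m < n" by blast
  then show "gh P n [Inl A] w" using gh.ghN[of A \<beta> P m w n "[]" "[]"] gh.ghNil[of P n] by simp
qed

definition gen :: "'t cfg_prods \<Rightarrow> nat \<Rightarrow> 't list \<Rightarrow> bool" where
  "gen P A w \<longleftrightarrow> (\<exists>n. gh P n [Inl A] w)"

lemma der_gh: "(\<alpha>, map Inr w) \<in> (cfg_step P)\<^sup>* \<Longrightarrow> \<exists>n. gh P n \<alpha> w"
proof (induction rule: converse_rtrancl_induct)
  case base then show ?case using gh_terms by blast
next
  case (step y z)
  from step.hyps(1) obtain u A v \<gamma> where y: "y = u @ [Inl A] @ v" and z: "z = u @ \<gamma> @ v"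
    and p: "(A, \<gamma>) \<in> P" by (auto elim: cfg_step.cases)
  from step.IH obtain n where "gh P n z w" by blast
  then obtain w1 w23 where "w = w1 @ w23" "gh P n u w1" "gh P n (\<gamma> @ v) w23"
    using gh_split z by blast
  moreover from this(3) obtain w2 w3 where "w23 = w2 @ w3" "gh P n \<gamma> w2" "gh P n v w3"
    using gh_split by blast
  ultimately have "gh P (Suc n) (u @ [Inl A] @ v) w"
    using gh_app gh_mono p gh.ghN[of A \<gamma> P n w2 "Suc n" v w3]
    by (metis Suc_n_not_le_n append.left_neutral append_Cons le_SucI lessI nat_le_linear)
  then show ?case using y by blast
qed

lemma step_ctx: "(x, y) \<in> (cfg_step P)\<^sup>* \<Longrightarrow> (u @ x @ v, u @ y @ v) \<in> (cfg_step P)\<^sup>*"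
proof (induction rule: rtrancl_induct)
  case base then show ?case by simp
next
  case (step y z)
  from step.hyps(2) obtain u' A v' \<gamma> where "y = u' @ [Inl A] @ v'" "z = u' @ \<gamma> @ v'" "(A, \<gamma>) \<in> P"
    by (auto elim: cfg_step.cases)
  then have "(u @ y @ v, u @ z @ v) \<in> cfg_step P"
    using cfg_step.intros[of A \<gamma> P "u @ u'" "v' @ v"] by simp
  with step.IH show ?case by (rule rtrancl_into_rtrancl)
qed

lemma gh_der: "gh P n \<alpha> w \<Longrightarrow> (\<alpha>, map Inr w) \<in> (cfg_step P)\<^sup>*"
proof (induction rule: gh.induct)
  case (ghNil n) then show ?case by simp
next
  case (ghT n \<alpha> w a) then show ?case using step_ctx[of \<alpha> "map Inr w" P "[Inr a]" "[]"] by simp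
next
  case (ghN A \<beta> m w1 n \<alpha> w2)
  have 1: "(Inl A # \<alpha>, \<beta> @ \<alpha>) \<in> (cfg_step P)\<^sup>*"
    using cfg_step.intros[OF ghN.hyps(1), of "[]" \<alpha>] by auto
  have 2: "(\<beta> @ \<alpha>, map Inr w1 @ \<alpha>) \<in> (cfg_step P)\<^sup>*"
    using step_ctx[OF ghN.IH(1), of "[]" \<alpha>] by simp
  have 3: "(map Inr w1 @ \<alpha>, map Inr w1 @ map Inr w2) \<in> (cfg_step P)\<^sup>*"
    using step_ctx[OF ghN.IH(2), of "map Inr w1" "[]"] by simp
  show ?case using 1 2 3 by simp
qed

lemma lang_gen: "w \<in> cfg_lang P S \<longleftrightarrow> gen P S w"
  unfolding cfg_lang_def gen_def using der_gh gh_der by fastforce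

definition ctxs :: "'t cfg_prods \<Rightarrow> nat \<Rightarrow> 't list \<Rightarrow> nat \<Rightarrow> 't list \<Rightarrow> bool" where
  "ctxs P A r B t \<longleftrightarrow> (\<forall>s. gen P B s \<longrightarrow> gen P A (r @ s @ t))"

lemma ctxs_refl: "ctxs P A [] A []" by (simp add: ctxs_def)

lemma ctxs_comp: "ctxs P A r B t \<Longrightarrow> ctxs P B r' C t' \<Longrightarrow> ctxs P A (r @ r') C (t' @ t)"
  unfolding ctxs_def by (metis append_assoc)

lemma ctxs_from_prod:
  assumes "(A, \<beta>1 @ [Inl C] @ \<beta>2) \<in> P" "gh P m \<beta>1 r" "gh P m \<beta>2 t"
  shows "ctxs P A r C t"
  unfolding ctxs_def
proof (intro allI impI)
  fix s assume "gen P C s"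
  then obtain n' where n': "gh P n' [Inl C] s" unfolding gen_def by blast
  define N where "N = max m n'"
  have "gh P N (\<beta>1 @ [Inl C] @ \<beta>2) (r @ s @ t)"
    using gh_app gh_mono assms(2,3) n' unfolding N_def by (metis max.cobounded1 max.cobounded2)
  then have "gh P (Suc N) [Inl A] (r @ s @ t)" using gh_single assms(1) by blast
  then show "gen P A (r @ s @ t)" unfolding gen_def by blast
qed

lemma big_child:
  "gh P m \<beta> w \<Longrightarrow> 1 \<le> M \<Longrightarrow> length w > length \<beta> * M \<Longrightarrow>
   \<exists>\<beta>1 C \<beta>2 r s t. \<beta> = \<beta>1 @ [Inl C] @ \<beta>2 \<and> gh P m \<beta>1 r \<and> gh P m [Inl C] s \<and> gh P m \<beta>2 t
      \<and> w = r @ s @ t \<and> length s > M"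
proof (induction rule: gh.induct)
  case (ghNil n) then show ?case by simp
next
  case (ghT n \<alpha> w a)
  then have "length w > length \<alpha> * M" by simp
  with ghT.IH ghT.prems obtain \<beta>1 C \<beta>2 r s t where
    h: "\<alpha> = \<beta>1 @ [Inl C] @ \<beta>2" "gh P n \<beta>1 r" "gh P n [Inl C] s" "gh P n \<beta>2 t" "w = r @ s @ t" "length s > M"
    by blast
  have "Inr a # \<alpha> = (Inr a # \<beta>1) @ [Inl C] @ \<beta>2" "gh P n (Inr a # \<beta>1) (a # r)" "a # w = (a # r) @ s @ t"
    using h by (auto intro: gh.intros)
  then show ?case using h by blast
next
  case (ghN A \<beta>' m w1 n \<alpha> w2)
  show ?case
  proof (cases "length w1 > M")
    case True
    have "gh P n [Inl A] w1" using gh_single ghN.hyps by blast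
    then have "Inl A # \<alpha> = [] @ [Inl A] @ \<alpha> \<and> gh P n [] [] \<and> gh P n [Inl A] w1 \<and> gh P n \<alpha> w2
      \<and> w1 @ w2 = [] @ w1 @ w2 \<and> length w1 > M" using True ghN.hyps by (simp add: gh.ghNil)
    then show ?thesis by blast
  next
    case False
    then have "length w2 > length \<alpha> * M" using ghN.prems by simp
    with ghN.IH(2) ghN.prems obtain \<beta>1 C \<beta>2 r s t where
      h: "\<alpha> = \<beta>1 @ [Inl C] @ \<beta>2" "gh P n \<beta>1 r" "gh P n [Inl C] s" "gh P n \<beta>2 t" "w2 = r @ s @ t" "length s > M"
      by blast
    have "Inl A # \<alpha> = (Inl A # \<beta>1) @ [Inl C] @ \<beta>2" "gh P n (Inl A # \<beta>1) (w1 @ r)" "w1 @ w2 = (w1 @ r) @ s @ t"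
      using h ghN.hyps by (auto intro: gh.intros)
    then show ?thesis using h by blast
  qed
qed

definition KK :: "'t cfg_prods \<Rightarrow> nat" where
  "KK P = Max (insert 1 ((\<lambda>p. length (snd p)) ` P))"

lemma KK_ge: "finite P \<Longrightarrow> (A, \<beta>) \<in> P \<Longrightarrow> length \<beta> \<le> KK P"
  unfolding KK_def by (rule Max_ge) force+

lemma KK_pos: "finite P \<Longrightarrow> 1 \<le> KK P"
  unfolding KK_def by (rule Max_ge) auto

lemma descend:
  "gh P n [Inl A] w \<Longrightarrow> finite P \<Longrightarrow> 1 \<le> M \<Longrightarrow> length w > KK P * M \<Longrightarrow>
   \<exists>r D s t. ctxs P A r D t \<and> gen P D s \<and> w = r @ s @ t \<and> r @ t \<noteq> [] \<and> length s > M"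
proof (induction n arbitrary: A w rule: less_induct)
  case (less n)
  from less.prems(1) obtain \<beta> m where p: "(A, \<beta>) \<in> P" "gh P m \<beta> w" "m < n" using gh_single by blast
  have "length \<beta> * M \<le> KK P * M" using KK_ge[OF less.prems(2) p(1)] by simp
  then have "length w > length \<beta> * M" using less.prems(4) by linarith
  from big_child[OF p(2) less.prems(3) this] obtain \<beta>1 C \<beta>2 r s t where
    h: "\<beta> = \<beta>1 @ [Inl C] @ \<beta>2" "gh P m \<beta>1 r" "gh P m [Inl C] s" "gh P m \<beta>2 t" "w = r @ s @ t" "length s > M"
    by blast
  have c: "ctxs P A r C t" using ctxs_from_prod p(1) h by metis
  show ?case
  proof (cases "r @ t = []")
    case False
    then show ?thesis using c h unfolding gen_def by blast
  next
    case True
    then have "s = w" "r = []" "t = []" using h by auto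
    with less.IH[OF p(3) h(3) less.prems(2,3)] less.prems(4) obtain r' D s' t' where
      "ctxs P C r' D t'" "gen P D s'" "s = r' @ s' @ t'" "r' @ t' \<noteq> []" "length s' > M" by blast
    moreover have "ctxs P A r' D t'" using ctxs_comp[OF c calculation(1)] \<open>r = []\<close> \<open>t = []\<close> by simp
    ultimately show ?thesis using \<open>s = w\<close> by blast
  qed
qed

definition pumpable :: "'t cfg_prods \<Rightarrow> (nat \<Rightarrow> nat) \<Rightarrow> nat \<Rightarrow> 't list \<Rightarrow> nat \<Rightarrow> bool" where
  "pumpable P f A w off \<longleftrightarrow> (\<exists>r B v s x t. ctxs P A r B t \<and> ctxs P B v B x \<and> gen P B s \<and>
     w = r @ v @ s @ x @ t \<and> v @ x \<noteq> [] \<and>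
     f (off + length r) = f (off + length r + length v) \<and>
     f (off + length r + length v + length s) = f (off + length r + length v + length s + length x))"

lemma claim:
  "finite P \<Longrightarrow> finite X \<Longrightarrow> card X = k \<Longrightarrow> gh P n [Inl A] w \<Longrightarrow> length w > KK P ^ k \<Longrightarrow>
   pumpable P f A w off \<or> (\<exists>r D s t. ctxs P A r D t \<and> gen P D s \<and> w = r @ s @ t \<and>
      (D, f (off + length r), f (off + length r + length s)) \<notin> X)"
proof (induction k arbitrary: X A n w off)
  case 0
  then have "X = {}" by simp
  then have "ctxs P A [] A [] \<and> gen P A w \<and> w = [] @ w @ [] \<and> (A, f (off + length ([]::'a list)), f (off + length ([]::'a list) + length w)) \<notin> X"
    using ctxs_refl 0 unfolding gen_def by auto
  then show ?case by blast
next
  case (Suc k)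
  show ?case
  proof (cases "(A, f off, f (off + length w)) \<in> X")
    case False
    then have "ctxs P A [] A [] \<and> gen P A w \<and> w = [] @ w @ [] \<and> (A, f (off + length ([]::'a list)), f (off + length ([]::'a list) + length w)) \<notin> X"
      using ctxs_refl Suc.prems unfolding gen_def by auto
    then show ?thesis by blast
  next
    case True
    define key where "key = (A, f off, f (off + length w))"
    have M1: "1 \<le> KK P ^ k" using KK_pos[OF Suc.prems(1)] by simp
    have "length w > KK P * KK P ^ k" using Suc.prems(5) by simp
    from descend[OF Suc.prems(4,1) M1 this] obtain r1 D1 s1 t1 where
      d: "ctxs P A r1 D1 t1" "gen P D1 s1" "w = r1 @ s1 @ t1" "r1 @ t1 \<noteq> []" "length s1 > KK P ^ k"
      by blast
    from d(2) obtain n1 where n1: "gh P n1 [Inl D1] s1" unfolding gen_def by blast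
    have fX: "finite (X - {key})" using Suc.prems(2) by simp
    have cX: "card (X - {key}) = k" using Suc.prems(2,3) True unfolding key_def by simp
    from Suc.IH[OF Suc.prems(1) fX cX n1 d(5), where off = "off + length r1"]
    show ?thesis
    proof
      assume "pumpable P f D1 s1 (off + length r1)"
      then obtain r B v s x t where p: "ctxs P D1 r B t" "ctxs P B v B x" "gen P B s"
        "s1 = r @ v @ s @ x @ t" "v @ x \<noteq> []"
        "f (off + length r1 + length r) = f (off + length r1 + length r + length v)"
        "f (off + length r1 + length r + length v + length s) = f (off + length r1 + length r + length v + length s + length x)"
        unfolding pumpable_def by blast
      have "ctxs P A (r1 @ r) B (t @ t1)" using ctxs_comp[OF d(1) p(1)] .
      moreover have "w = (r1 @ r) @ v @ s @ x @ (t @ t1)" using d(3) p(4) by simp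
      ultimately have "pumpable P f A w off" unfolding pumpable_def using p
        by (intro exI[of _ "r1 @ r"] exI[of _ B] exI[of _ v] exI[of _ s] exI[of _ x] exI[of _ "t @ t1"])
           (simp add: add.assoc)
      then show ?thesis by blast
    next
      assume "\<exists>r D s t. ctxs P D1 r D t \<and> gen P D s \<and> s1 = r @ s @ t \<and>
          (D, f (off + length r1 + length r), f (off + length r1 + length r + length s)) \<notin> X - {key}"
      then obtain r D s t where q: "ctxs P D1 r D t" "gen P D s" "s1 = r @ s @ t"
        "(D, f (off + length r1 + length r), f (off + length r1 + length r + length s)) \<notin> X - {key}"
        by blast
      have c: "ctxs P A (r1 @ r) D (t @ t1)" using ctxs_comp[OF d(1) q(1)] .
      have w: "w = (r1 @ r) @ s @ (t @ t1)" using d(3) q(3) by simp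
      show ?thesis
      proof (cases "(D, f (off + length r1 + length r), f (off + length r1 + length r + length s)) \<in> X")
        case False
        then show ?thesis using c w q(2) by (intro disjI2 exI[of _ "r1 @ r"] exI[of _ D] exI[of _ s] exI[of _ "t @ t1"]) (simp add: add.assoc)
      next
        case True
        with q(4) have k: "D = A" "f (off + length r1 + length r) = f off"
          "f (off + length r1 + length r + length s) = f (off + length w)" unfolding key_def by auto
        have len: "off + length w = off + length (r1 @ r) + length s + length (t @ t1)" using w by simp
        have "pumpable P f A w off" unfolding pumpable_def
          apply (rule exI[of _ "[]"], rule exI[of _ A], rule exI[of _ "r1 @ r"], rule exI[of _ s],
                 rule exI[of _ "t @ t1"], rule exI[of _ "[]"])
          using ctxs_refl c q(2) w d(4) k len by (auto simp: add.assoc)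
        then show ?thesis by blast
      qed
    qed
  qed
qed

theorem pumping:
  assumes "finite P"
  shows "\<exists>N. \<forall>w f. w \<in> cfg_lang P S \<longrightarrow> (\<forall>i. f i < (4::nat)) \<longrightarrow> length w > N \<longrightarrow>
    (\<exists>r v s x t. w = r @ v @ s @ x @ t \<and> v @ x \<noteq> [] \<and>
       f (length r) = f (length r + length v) \<and>
       f (length r + length v + length s) = f (length r + length v + length s + length x) \<and>
       r @ s @ t \<in> cfg_lang P S \<and> r @ v @ v @ s @ x @ x @ t \<in> cfg_lang P S)"
proof -
  define T where "T = Domain P \<times> {..<(4::nat)} \<times> {..<(4::nat)}"
  have fT: "finite T" unfolding T_def using assms by (simp add: finite_Domain)
  show ?thesis
  proof (rule exI[of _ "KK P ^ card T"], intro allI impI)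
    fix w and f :: "nat \<Rightarrow> nat"
    assume w: "w \<in> cfg_lang P S" and f4: "\<forall>i. f i < 4" and len: "length w > KK P ^ card T"
    from w obtain n where n: "gh P n [Inl S] w" unfolding lang_gen gen_def by blast
    from claim[OF assms fT refl n len, of f 0]
    have "pumpable P f S w 0"
    proof
      assume "\<exists>r D s t. ctxs P S r D t \<and> gen P D s \<and> w = r @ s @ t \<and>
         (D, f (0 + length r), f (0 + length r + length s)) \<notin> T"
      then obtain r D s t where "ctxs P S r D t" "gen P D s" "(D, f (0 + length r), f (0 + length r + length s)) \<notin> T" by blast
      moreover from this(2) have "D \<in> Domain P" unfolding gen_def using gh_single by blast
      ultimately show ?thesis using f4 unfolding T_def by auto
    qed
    then obtain r B v s x t where p: "ctxs P S r B t" "ctxs P B v B x" "gen P B s"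
        "w = r @ v @ s @ x @ t" "v @ x \<noteq> []"
        "f (length r) = f (length r + length v)"
        "f (length r + length v + length s) = f (length r + length v + length s + length x)"
      unfolding pumpable_def by auto
    have g0: "gen P S (r @ s @ t)" using p(1,3) unfolding ctxs_def by blast
    have "gen P B (v @ s @ x)" using p(2,3) unfolding ctxs_def by blast
    then have "gen P B (v @ (v @ s @ x) @ x)" using p(2) unfolding ctxs_def by blast
    then have g2: "gen P S (r @ (v @ (v @ s @ x) @ x) @ t)" using p(1) unfolding ctxs_def by blast
    show "\<exists>r v s x t. w = r @ v @ s @ x @ t \<and> v @ x \<noteq> [] \<and>
       f (length r) = f (length r + length v) \<and>
       f (length r + length v + length s) = f (length r + length v + length s + length x) \<and>
       r @ s @ t \<in> cfg_lang P S \<and> r @ v @ v @ s @ x @ x @ t \<in> cfg_lang P S"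
      using p g0 g2 unfolding lang_gen by (intro exI[of _ r] exI[of _ v] exI[of _ s] exI[of _ x] exI[of _ t]) simp
  qed
qed



definition dl :: "nat \<Rightarrow> isym \<Rightarrow> nat" where
  "dl q c = (if q = 0 then (case c of Iu \<Rightarrow> 0 | I0 \<Rightarrow> 1 | Ih \<Rightarrow> 2)
             else if q = 1 then (case c of Iu \<Rightarrow> 3 | I0 \<Rightarrow> 1 | Ih \<Rightarrow> 2) else 3)"

definition ds :: "nat \<Rightarrow> isym list \<Rightarrow> nat" where
  "ds q xs = foldl dl q xs"

lemma ds_lt: "q < 4 \<Longrightarrow> ds q xs < 4"
  unfolding ds_def by (induction xs arbitrary: q) (auto simp: dl_def split: isym.splits)

lemma ds3: "ds 3 y = 3"
  unfolding ds_def by (induction y) (auto simp: dl_def)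

lemma ds2: "ds 2 y = 2 \<Longrightarrow> y = []"
  using ds3 unfolding ds_def by (cases y) (auto simp: dl_def)

lemma ds1: "ds 1 y = 2 \<Longrightarrow> y = replicate (count_list y I0) I0 @ [Ih] \<and> count_list y Iu = 0"
proof (induction y)
  case Nil then show ?case by (simp add: ds_def)
next
  case (Cons c y)
  show ?case
  proof (cases c)
    case Iu then show ?thesis using Cons.prems ds3 by (simp add: ds_def dl_def)
  next
    case I0 then show ?thesis using Cons by (simp add: ds_def dl_def)
  next
    case Ih then show ?thesis using Cons.prems ds2[of y] by (simp add: ds_def dl_def)
  qed
qed

lemma ds0: "ds 0 y = 2 \<Longrightarrow> y = replicate (count_list y Iu) Iu @ replicate (count_list y I0) I0 @ [Ih]"
proof (induction y)
  case Nil then show ?case by (simp add: ds_def)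
next
  case (Cons c y)
  show ?case
  proof (cases c)
    case Iu then show ?thesis using Cons by (simp add: ds_def dl_def)
  next
    case I0 then show ?thesis using Cons.prems ds1[of y] by (simp add: ds_def dl_def)
  next
    case Ih then show ?thesis using Cons.prems ds2[of y] by (simp add: ds_def dl_def)
  qed
qed

lemma count_rep: "count_list (replicate n x) y = (if x = y then n else 0)"
  by (induction n) auto

lemma len_counts: "length (y::isym list) = count_list y Iu + count_list y I0 + count_list y Ih"
proof (induction y)
  case Nil then show ?case by simp
next
  case (Cons c y) then show ?case by (cases c) auto
qed

lemma ds_wd: "ds 0 (wd a b) = 2"
proof -
  have "foldl dl 0 (replicate a Iu) = 0" by (induction a) (auto simp: dl_def)
  moreover have k1: "foldl dl 1 (replicate k I0) = 1" for k by (induction k) (auto simp: dl_def)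
  moreover have "foldl dl 0 (replicate b I0) = (if b = 0 then 0 else 1)"
    using k1 by (cases b) (auto simp: dl_def)
  ultimately show ?thesis unfolding ds_def wd_def by (auto simp: dl_def)
qed

lemma halts_wd_iff: "y \<in> L_cc \<Longrightarrow> ds 0 y = 2 \<Longrightarrow> \<not> (count_list y Iu + 1 < 2 ^ count_list y I0)"
proof
  assume y: "y \<in> L_cc" "ds 0 y = 2" and lt: "count_list y Iu + 1 < 2 ^ count_list y I0"
  have "y = wd (count_list y Iu) (count_list y I0)" unfolding wd_def using ds0[OF y(2)] .
  then have "halts (wd (count_list y Iu) (count_list y I0))" using y(1) unfolding L_cc_def by simp
  then show False using halts_no[OF lt] by simp
qed

theorem theorem3:
  shows "\<not> context_free L_cc"
proof
  assume "context_free L_cc"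
  then obtain P S where fP: "finite P" and L: "L_cc = cfg_lang P S" unfolding context_free_def by blast
  from pumping[OF fP, of S] obtain N where pump: "\<And>w f. w \<in> cfg_lang P S \<Longrightarrow> (\<forall>i. f i < (4::nat)) \<Longrightarrow> length w > N \<Longrightarrow>
    (\<exists>r v s x t. w = r @ v @ s @ x @ t \<and> v @ x \<noteq> [] \<and>
       f (length r) = f (length r + length v) \<and>
       f (length r + length v + length s) = f (length r + length v + length s + length x) \<and>
       r @ s @ t \<in> cfg_lang P S \<and> r @ v @ v @ s @ x @ x @ t \<in> cfg_lang P S)" by blast
  define b where "b = N"
  define a :: nat where "a = 2 ^ b - 1"
  define w where "w = wd a b"
  have wL: "w \<in> cfg_lang P S" using halts_yes[of b] unfolding L[symmetric] L_cc_def w_def a_def by simp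
  have lw: "length w > N" unfolding w_def wd_def b_def by simp
  have f4: "\<forall>i. ds 0 (take i w) < 4" using ds_lt by simp
  from pump[OF wL f4 lw] obtain r v s x t where
    d: "w = r @ v @ s @ x @ t" "v @ x \<noteq> []"
    "ds 0 (take (length r) w) = ds 0 (take (length r + length v) w)"
    "ds 0 (take (length r + length v + length s) w) = ds 0 (take (length r + length v + length s + length x) w)"
    "r @ s @ t \<in> cfg_lang P S" "r @ v @ v @ s @ x @ x @ t \<in> cfg_lang P S"
    by blast
  define q1 where "q1 = ds 0 r"
  define q2 where "q2 = ds q1 s"
  have h1: "ds q1 v = q1" using d(3) unfolding d(1) q1_def ds_def by simp
  have h2: "ds q2 x = q2" using d(4) h1 unfolding d(1) q1_def q2_def ds_def by simp
  have hw: "ds q2 t = 2" using ds_wd[of a b] h1 h2 unfolding w_def[symmetric] d(1) q1_def q2_def ds_def by simp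
  define w0 where "w0 = r @ s @ t"
  define w2 where "w2 = r @ v @ v @ s @ x @ x @ t"
  have dw0: "ds 0 w0 = 2" using hw unfolding w0_def q1_def q2_def ds_def by simp
  have dw2: "ds 0 w2 = 2" using hw h1 h2 unfolding w2_def q1_def q2_def ds_def by simp
  have w0L: "w0 \<in> L_cc" using d(5) L unfolding w0_def by simp
  have w2L: "w2 \<in> L_cc" using d(6) L unfolding w2_def by simp
  have cw: "count_list w Iu = a" "count_list w I0 = b" "count_list w Ih = 1"
    unfolding w_def wd_def by (auto simp: count_rep)
  define cu where "cu = count_list (v @ x) Iu"
  define cz where "cz = count_list (v @ x) I0"
  define ch where "ch = count_list (v @ x) Ih"
  have c0: "count_list w0 c + count_list (v @ x) c = count_list w c" for c
    unfolding w0_def d(1) by simp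
  have c2: "count_list w2 c = count_list w c + count_list (v @ x) c" for c
    unfolding w2_def d(1) by simp
  have "count_list w2 Ih = 1" using ds0[OF dw2] by (metis count_rep count_list_append isym.distinct(4) isym.distinct(6) add_0 count_list.simps replicate_0 replicate_Suc)
  then have ch0: "ch = 0" using c2[of Ih] cw(3) unfolding ch_def by simp
  have "length (v @ x) = cu + cz + ch" unfolding cu_def cz_def ch_def by (rule len_counts)
  then have pos: "cu + cz \<ge> 1" using d(2) ch0 by (cases "v @ x") auto
  have n0: "\<not> (count_list w0 Iu + 1 < 2 ^ count_list w0 I0)" using halts_wd_iff[OF w0L dw0] .
  have n2: "\<not> (count_list w2 Iu + 1 < 2 ^ count_list w2 I0)" using halts_wd_iff[OF w2L dw2] .
  have bpos: "(1::nat) \<le> 2 ^ b" by simp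
  show False
  proof (cases "cz = 0")
    case True
    then have "count_list w0 I0 = b" "count_list w0 Iu + cu = a" using c0[of I0] c0[of Iu] cw unfolding cz_def cu_def by auto
    then show False using n0 pos True unfolding a_def by simp
  next
    case False
    have e: "count_list w2 I0 = b + cz" "count_list w2 Iu = a + cu" using c2 cw unfolding cz_def cu_def by auto
    have "cu \<le> a" using c0[of Iu] cw unfolding cu_def by simp
    moreover have "(2::nat) ^ (b + 1) \<le> 2 ^ (b + cz)" using False by (intro power_increasing) auto
    moreover have "a + 1 = 2 ^ b" unfolding a_def using bpos by simp
    ultimately have "a + cu + 1 < 2 ^ (b + cz)" by simp
    then show False using n2 e by simp
  qed
qed

end
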